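(* In the setting of the multi-position greedy algorithm (positions $1,\dots,L$, pairwise disjoint ray sets $V_l$ with $|V_l|\ge K$, vectors $\mathbf p_j\in[0,1]^V$, $\boldsymbol\epsilon\in[0,1]^V$, $E=\sum_i\epsilon_i$, greedy iterates with final cost $f^{LK}=\sum_i b^{LK}_i$), let $$\mathrm{OPT}=\min\Big\{\sum_{i=1}^V\prod_{j\in J}p_{ij}\ :\ J\subseteq V_1\cup\dots\cup V_L,\ |J\cap V_l|\le K\ \forall l\Big\}>0,$$ let $R_1,\dots,R_{L-1}\ge 0$, and put $\overline{\mathrm{OPT}}_u=\mathrm{OPT}+\sum_{v=1}^u R_v$ for $u=0,\dots,L-1$. Assume that for every $t\in\{0,\dots,LK-1\}$ the set $A_t$ of rays available before iteration $t+1$ contains a nonempty subset $S$ with $|S|\le LK$ and $\sum_i\prod_{j\in S}p_{ij}\le\overline{\mathrm{OPT}}_{\lfloor t/K\rfloor}$. Let $0<\mathrm{LB}\le\mathrm{OPT}$. Then the approximation ratio $\rho=f^{LK}/\mathrm{OPT}$ satisfies $$\rho\le\frac{E}{\mathrm{LB}}\cdot\frac{1}{e}+\sum_{u=0}^{L-1}\gamma_u\Big(1+\frac{\sum_{v=1}^uR_v}{\mathrm{LB}}\Big),\qquad \gamma_u=\Big(1-e^{-1/L}\Big)\Big(e^{-1/L}\Big)^{L-1-u}.$$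
   Context: Multi-position greedy algorithm: $\mathbf b^0=\boldsymbol\epsilon$, $A_0=V_1\cup\dots\cup V_L$, $J_l=\emptyset$; at each iteration $t$ choose $j_t\in\arg\min_{j\in A_{t-1}}\sum_i b^{t-1}_ip_{ij}$ with position $l_t$, add $j_t$ to $J_{l_t}$, set $\mathbf b^t=\mathbf b^{t-1}\odot\mathbf p_{j_t}$ (coordinatewise product), and remove $j_t$ from the available set, removing all of $V_{l_t}$ instead if $|J_{l_t}|=K$. It runs $LK$ iterations. $R_v$ bounds the increase of the achievable optimum caused by closing the $v$-th position. $e$ is Euler's number. *)

theory Defs
  imports Complex_Main
begin

text \<open>Setting: coordinates i \<in> {1..n} (n is the paper's V), positions l \<in> {1..L},
  ray sets Vs l, vectors p j :: nat \<Rightarrow> real, initial vector eps.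
  A run of the greedy algorithm is given by the sequence js 1, ..., js (L*K)
  of chosen rays.\<close>

definition all_rays :: "(nat \<Rightarrow> 'r set) \<Rightarrow> nat \<Rightarrow> 'r set" where
  "all_rays Vs L = (\<Union>l\<in>{1..L}. Vs l)"

definition position_of :: "(nat \<Rightarrow> 'r set) \<Rightarrow> nat \<Rightarrow> 'r \<Rightarrow> nat" where
  "position_of Vs L j = (THE l. l \<in> {1..L} \<and> j \<in> Vs l)"

definition chosen_in :: "(nat \<Rightarrow> 'r set) \<Rightarrow> (nat \<Rightarrow> 'r) \<Rightarrow> nat \<Rightarrow> nat \<Rightarrow> 'r set" where
  "chosen_in Vs js t l = {js s | s. s \<in> {1..t} \<and> js s \<in> Vs l}"

primrec avail :: "(nat \<Rightarrow> 'r set) \<Rightarrow> nat \<Rightarrow> nat \<Rightarrow> (nat \<Rightarrow> 'r) \<Rightarrow> nat \<Rightarrow> 'r set" where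
  "avail Vs L K js 0 = all_rays Vs L"
| "avail Vs L K js (Suc t) =
     (let l = position_of Vs L (js (Suc t)) in
      if card (chosen_in Vs js (Suc t) l) = K
      then avail Vs L K js t - Vs l
      else avail Vs L K js t - {js (Suc t)})"

definition bvec :: "(nat \<Rightarrow> real) \<Rightarrow> ('r \<Rightarrow> nat \<Rightarrow> real) \<Rightarrow> (nat \<Rightarrow> 'r) \<Rightarrow> nat \<Rightarrow> nat \<Rightarrow> real" where
  "bvec eps p js t i = eps i * (\<Prod>s\<in>{1..t}. p (js s) i)"

definition greedy_run ::
  "nat \<Rightarrow> (nat \<Rightarrow> 'r set) \<Rightarrow> nat \<Rightarrow> nat \<Rightarrow> ('r \<Rightarrow> nat \<Rightarrow> real) \<Rightarrow> (nat \<Rightarrow> real) \<Rightarrow> (nat \<Rightarrow> 'r) \<Rightarrow> bool" where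
  "greedy_run n Vs L K p eps js \<longleftrightarrow>
     (\<forall>t\<in>{1..L*K}. js t \<in> avail Vs L K js (t - 1) \<and>
        (\<forall>j\<in>avail Vs L K js (t - 1).
           (\<Sum>i\<in>{1..n}. bvec eps p js (t - 1) i * p (js t) i)
             \<le> (\<Sum>i\<in>{1..n}. bvec eps p js (t - 1) i * p j i)))"

definition cost :: "nat \<Rightarrow> ('r \<Rightarrow> nat \<Rightarrow> real) \<Rightarrow> 'r set \<Rightarrow> real" where
  "cost n p J = (\<Sum>i\<in>{1..n}. \<Prod>j\<in>J. p j i)"

definition OPT :: "nat \<Rightarrow> (nat \<Rightarrow> 'r set) \<Rightarrow> nat \<Rightarrow> nat \<Rightarrow> ('r \<Rightarrow> nat \<Rightarrow> real) \<Rightarrow> real" where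
  "OPT n Vs L K p = Min (cost n p ` {J. J \<subseteq> all_rays Vs L \<and> (\<forall>l\<in>{1..L}. card (J \<inter> Vs l) \<le> K)})"

end

theory Submission
  imports Defs
begin

lemma sum_le_card_prod:
  fixes x :: "'a \<Rightarrow> real"
  assumes "finite S" "\<forall>j\<in>S. 0 \<le> x j \<and> x j \<le> 1"
  shows "(\<Sum>j\<in>S. x j) \<le> real (card S) - 1 + (\<Prod>j\<in>S. x j) \<and> 0 \<le> (\<Prod>j\<in>S. x j) \<and> (\<Prod>j\<in>S. x j) \<le> 1"
  using assms
proof (induction S rule: finite_induct)
  case empty then show ?case by simp
next
  case (insert a S)
  let ?P = "\<Prod>j\<in>S. x j"
  from insert have IH: "(\<Sum>j\<in>S. x j) \<le> real (card S) - 1 + ?P" "0 \<le> ?P" "?P \<le> 1" by auto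
  have xa: "0 \<le> x a" "x a \<le> 1" using insert.prems by auto
  have "(1 - x a) * (1 - ?P) \<ge> 0" using xa IH by simp
  then have A: "x a + ?P \<le> 1 + x a * ?P" by (simp add: algebra_simps)
  moreover have "0 \<le> x a * ?P" "x a * ?P \<le> 1" using xa IH by (auto intro: mult_le_one)
  ultimately show ?case using insert.hyps IH by simp
qed

lemma seq_bound:
  fixes f C :: "nat \<Rightarrow> real" and L K :: nat
  assumes L: "L \<ge> 1" and K: "K \<ge> 1"
    and mono: "\<forall>t<L*K. f (Suc t) \<le> f t"
    and step: "\<forall>t<L*K. f (Suc t) \<le> (1 - 1/real (L*K)) * f t + C (t div K) / real (L*K)"
  shows "f (L*K) \<le> exp (- 1 / real L) ^ L * f 0
           + (\<Sum>u<L. (1 - exp (- 1 / real L)) * exp (- 1 / real L) ^ (L - 1 - u) * C u)"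
proof -
  define N where "N = L*K"
  define a where "a = 1 - 1/real N"
  define r where "r = exp (- 1 / real L)"
  have "N \<ge> 1" using L K by (simp add: N_def)
  then have Npos: "real N \<ge> 1" by simp
  have a0: "0 \<le> a" using Npos by (simp add: a_def)
  have r0: "0 \<le> r" and r1: "r \<le> 1" using L by (auto simp: r_def)
  have ar: "a ^ K \<le> r"
  proof -
    have "a \<le> exp (- (1/real N))" unfolding a_def using exp_ge_add_one_self[of "-(1/real N)"] by simp
    then have "a ^ K \<le> exp (- (1/real N)) ^ K" by (rule power_mono[OF _ a0])
    also have "\<dots> = exp (real K * - (1/real N))" by (rule exp_of_nat_mult[symmetric])
    also have "real K * - (1/real N) = - 1 / real L" using L K by (simp add: N_def field_simps)
    finally show ?thesis by (simp add: r_def)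
  qed
  have block: "f ((Suc u)*K) \<le> r * f (u*K) + (1 - r) * C u" if u: "u < L" for u
  proof -
    define W where "W = C u"
    have inner: "max (f (u*K+k) - W) 0 \<le> a^k * max (f (u*K) - W) 0 \<and> f (u*K+k) \<le> f (u*K)"
      if "k \<le> K" for k
      using that
    proof (induction k)
      case 0 show ?case by simp
    next
      case (Suc k)
      define t where "t = u*K+k"
      have "Suc u * K \<le> L * K" using u by (intro mult_right_mono) auto
      then have tN: "t < N" using Suc.prems by (simp add: t_def N_def)
      have tdiv: "t div K = u" using Suc.prems by (simp add: t_def)
      have s1: "f (Suc t) \<le> f t" using mono tN N_def by simp
      have "f (Suc t) \<le> a * f t + C (t div K) / real N" using step tN by (simp add: N_def a_def)
      also have "C (t div K) / real N = (1 - a) * W" by (simp add: a_def tdiv W_def)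
      finally have s2: "f (Suc t) \<le> a * f t + (1 - a) * W" .
      have IH: "max (f t - W) 0 \<le> a^k * max (f (u*K) - W) 0" "f t \<le> f (u*K)"
        using Suc by (auto simp: t_def)
      have M: "max (f (Suc t) - W) 0 \<le> a * max (f t - W) 0"
      proof (cases "f t \<ge> W")
        case True
        have "f (Suc t) - W \<le> a * (f t - W)" using s2 by (simp add: algebra_simps)
        moreover have "0 \<le> a * (f t - W)" using True a0 by simp
        ultimately show ?thesis using True by simp
      next
        case False then show ?thesis using s1 by simp
      qed
      also have "\<dots> \<le> a * (a^k * max (f (u*K) - W) 0)" using IH(1) a0 by (rule mult_left_mono)
      finally show ?case using s1 IH(2) by (simp add: t_def)
    qed
    have G: "max (f (Suc u * K) - W) 0 \<le> a^K * max (f (u*K) - W) 0" "f (Suc u * K) \<le> f (u*K)"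
      using inner[of K] by (auto simp: add.commute)
    have "a^K * max (f (u*K) - W) 0 \<le> r * max (f (u*K) - W) 0"
      using ar by (rule mult_right_mono) simp
    with G have G1: "max (f (Suc u * K) - W) 0 \<le> r * max (f (u*K) - W) 0" by linarith
    show ?thesis
    proof (cases "f (u*K) \<ge> W")
      case True
      then have "f (Suc u * K) - W \<le> r * (f (u*K) - W)" using G1 by simp
      then show ?thesis by (simp add: W_def algebra_simps)
    next
      case False
      have "(1 - r) * f (u*K) \<le> (1 - r) * W" using False r1 by (intro mult_left_mono) auto
      then show ?thesis using G(2) by (simp add: W_def algebra_simps)
    qed
  qed
  have outer: "u \<le> L \<Longrightarrow> f (u*K) \<le> r^u * f 0 + (\<Sum>v<u. (1-r) * r^(u-1-v) * C v)" for u
  proof (induction u)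
    case 0 show ?case by simp
  next
    case (Suc u)
    then have IH: "f (u*K) \<le> r^u * f 0 + (\<Sum>v<u. (1-r) * r^(u-1-v) * C v)" and uL: "u < L" by auto
    have "f (Suc u * K) \<le> r * f (u*K) + (1-r)*C u" by (rule block[OF uL])
    also have "\<dots> \<le> r * (r^u * f 0 + (\<Sum>v<u. (1-r) * r^(u-1-v) * C v)) + (1-r)*C u"
      using IH r0 by (simp add: mult_left_mono)
    also have "\<dots> = r^Suc u * f 0 + (\<Sum>v<Suc u. (1-r) * r^(Suc u-1-v) * C v)"
    proof -
      have "r * (\<Sum>v<u. (1-r) * r^(u-1-v) * C v) = (\<Sum>v<u. (1-r) * r^(Suc u-1-v) * C v)"
        unfolding sum_distrib_left
      proof (rule sum.cong)
        fix v assume "v \<in> {..<u}"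
        then have "Suc u - 1 - v = Suc (u - 1 - v)" by auto
        then show "r * ((1-r) * r^(u-1-v) * C v) = (1-r) * r^(Suc u-1-v) * C v" by simp
      qed simp
      then show ?thesis by (simp add: algebra_simps)
    qed
    finally show ?case .
  qed
  show ?thesis using outer[of L] by (simp add: r_def)
qed

theorem theorem3:
  fixes n L K :: nat and Vs :: "nat \<Rightarrow> 'r set" and p :: "'r \<Rightarrow> nat \<Rightarrow> real"
    and eps :: "nat \<Rightarrow> real" and js :: "nat \<Rightarrow> 'r" and R :: "nat \<Rightarrow> real" and LB :: real
  assumes L_pos: "L \<ge> 1" and K_pos: "K \<ge> 1"
    and Vs_fin: "\<forall>l\<in>{1..L}. finite (Vs l)"
    and Vs_card: "\<forall>l\<in>{1..L}. card (Vs l) \<ge> K"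
    and Vs_disj: "\<forall>l\<in>{1..L}. \<forall>l'\<in>{1..L}. l \<noteq> l' \<longrightarrow> Vs l \<inter> Vs l' = {}"
    and p_range: "\<forall>j\<in>all_rays Vs L. \<forall>i\<in>{1..n}. 0 \<le> p j i \<and> p j i \<le> 1"
    and eps_range: "\<forall>i\<in>{1..n}. 0 \<le> eps i \<and> eps i \<le> 1"
    and greedy: "greedy_run n Vs L K p eps js"
    and OPT_pos: "OPT n Vs L K p > 0"
    and R_nonneg: "\<forall>v\<in>{1..L-1}. R v \<ge> 0"
    and witness: "\<forall>t<L*K. \<exists>S. S \<subseteq> avail Vs L K js t \<and> S \<noteq> {} \<and> card S \<le> L*K \<and>
                     cost n p S \<le> OPT n Vs L K p + (\<Sum>v\<in>{1..t div K}. R v)"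
    and LB_pos: "0 < LB" and LB_le: "LB \<le> OPT n Vs L K p"
  shows "(\<Sum>i\<in>{1..n}. bvec eps p js (L*K) i) / OPT n Vs L K p
           \<le> (\<Sum>i\<in>{1..n}. eps i) / LB * (1 / exp 1)
             + (\<Sum>u\<in>{0..L-1}. ((1 - exp (- 1 / real L)) * (exp (- 1 / real L)) ^ (L - 1 - u))
                                * (1 + (\<Sum>v\<in>{1..u}. R v) / LB))"
proof -
  define f where "f t = (\<Sum>i\<in>{1..n}. bvec eps p js t i)" for t
  define N where "N = L*K"
  define Opt where "Opt = OPT n Vs L K p"
  define C where "C u = Opt + (\<Sum>v\<in>{1..u}. R v)" for u
  have Npos: "N \<ge> 1" using L_pos K_pos by (simp add: N_def)
  have fin_all: "finite (all_rays Vs L)" using Vs_fin by (simp add: all_rays_def)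
  have avail_sub: "avail Vs L K js t \<subseteq> all_rays Vs L" for t
    by (induction t) (auto simp: Let_def)
  have gr: "\<forall>t\<in>{1..L*K}. js t \<in> avail Vs L K js (t - 1) \<and>
        (\<forall>j\<in>avail Vs L K js (t - 1).
           (\<Sum>i\<in>{1..n}. bvec eps p js (t - 1) i * p (js t) i)
             \<le> (\<Sum>i\<in>{1..n}. bvec eps p js (t - 1) i * p j i))"
    using greedy by (simp add: greedy_run_def)
  have js_in: "js s \<in> all_rays Vs L" if "s \<in> {1..N}" for s
    using gr that avail_sub N_def by blast
  have bvec_Suc: "bvec eps p js (Suc t) i = bvec eps p js t i * p (js (Suc t)) i" for t i
    by (simp add: bvec_def atLeastAtMostSuc_conv)
  have b01: "0 \<le> bvec eps p js t i \<and> bvec eps p js t i \<le> 1" if "t \<le> N" "i \<in> {1..n}" for t i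
  proof -
    have P: "\<forall>s\<in>{1..t}. 0 \<le> p (js s) i \<and> p (js s) i \<le> 1"
      using js_in p_range that by fastforce
    then have "0 \<le> (\<Prod>s\<in>{1..t}. p (js s) i)" "(\<Prod>s\<in>{1..t}. p (js s) i) \<le> 1"
      by (auto intro: prod_nonneg prod_le_1)
    then show ?thesis using eps_range that unfolding bvec_def by (auto intro: mult_le_one)
  qed
  have mono: "\<forall>t<L*K. f (Suc t) \<le> f t"
  proof (intro allI impI)
    fix t assume t: "t < L*K"
    have "js (Suc t) \<in> all_rays Vs L" using js_in t N_def by simp
    then show "f (Suc t) \<le> f t" unfolding f_def bvec_Suc
      using b01 t p_range N_def by (intro sum_mono) (auto intro: mult_left_le)
  qed
  have step: "\<forall>t<L*K. f (Suc t) \<le> (1 - 1/real (L*K)) * f t + C (t div K) / real (L*K)"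
  proof (intro allI impI)
    fix t assume t: "t < L*K"
    obtain S where S: "S \<subseteq> avail Vs L K js t" "S \<noteq> {}" "card S \<le> L*K"
      "cost n p S \<le> Opt + (\<Sum>v\<in>{1..t div K}. R v)"
      using witness t Opt_def by blast
    have Sall: "S \<subseteq> all_rays Vs L" using S(1) avail_sub by blast
    have finS: "finite S" using Sall fin_all finite_subset by blast
    define m where "m = card S"
    have m1: "m \<ge> 1" using finS S(2) by (simp add: m_def Suc_le_eq card_gt_0_iff)
    have mN: "m \<le> N" using S(3) by (simp add: m_def N_def)
    have g: "js (Suc t) \<in> avail Vs L K js t \<and>
        (\<forall>j\<in>avail Vs L K js t.
           (\<Sum>i\<in>{1..n}. bvec eps p js t i * p (js (Suc t)) i)
             \<le> (\<Sum>i\<in>{1..n}. bvec eps p js t i * p j i))"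
      using bspec[OF gr, of "Suc t"] t by simp
    have fS: "f (Suc t) = (\<Sum>i\<in>{1..n}. bvec eps p js t i * p (js (Suc t)) i)"
      by (simp add: f_def bvec_Suc)
    have "real m * f (Suc t) = (\<Sum>j\<in>S. f (Suc t))" by (simp add: m_def)
    also have "\<dots> \<le> (\<Sum>j\<in>S. \<Sum>i\<in>{1..n}. bvec eps p js t i * p j i)"
      using g S(1) fS by (intro sum_mono) auto
    also have "\<dots> = (\<Sum>i\<in>{1..n}. bvec eps p js t i * (\<Sum>j\<in>S. p j i))"
      by (subst sum.swap) (simp add: sum_distrib_left)
    also have "\<dots> \<le> (\<Sum>i\<in>{1..n}. bvec eps p js t i * (real m - 1) + (\<Prod>j\<in>S. p j i))"
    proof (rule sum_mono)
      fix i assume i: "i \<in> {1..n}"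
      have pr: "\<forall>j\<in>S. 0 \<le> p j i \<and> p j i \<le> 1" using Sall p_range i by blast
      note K = sum_le_card_prod[OF finS pr]
      have bb: "0 \<le> bvec eps p js t i" "bvec eps p js t i \<le> 1" using b01 i t N_def by auto
      have "bvec eps p js t i * (\<Sum>j\<in>S. p j i) \<le> bvec eps p js t i * (real m - 1 + (\<Prod>j\<in>S. p j i))"
        using K bb by (intro mult_left_mono) (auto simp: m_def)
      also have "\<dots> = bvec eps p js t i * (real m - 1) + bvec eps p js t i * (\<Prod>j\<in>S. p j i)"
        by (simp add: algebra_simps)
      also have "bvec eps p js t i * (\<Prod>j\<in>S. p j i) \<le> (\<Prod>j\<in>S. p j i)"
        using K bb by (intro mult_left_le_one_le) auto
      finally show "bvec eps p js t i * (\<Sum>j\<in>S. p j i) \<le> bvec eps p js t i * (real m - 1) + (\<Prod>j\<in>S. p j i)"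
        by simp
    qed
    also have "\<dots> = (real m - 1) * f t + cost n p S"
      by (simp add: sum.distrib f_def cost_def sum_distrib_left mult.commute)
    finally have A: "real m * f (Suc t) \<le> (real m - 1) * f t + cost n p S" .
    have B: "real m * f (Suc t) \<le> (real m - 1) * f t + C (t div K)"
      using A S(4) by (simp add: C_def)
    have mo: "f (Suc t) \<le> f t" using mono t by simp
    have D: "real N * (f (Suc t) - f t) \<le> C (t div K) - f t"
    proof (cases "C (t div K) - f t \<ge> 0")
      case True
      have "real N * (f (Suc t) - f t) \<le> 0" using mo by (simp add: mult_nonneg_nonpos)
      then show ?thesis using True by linarith
    next
      case False
      have "real N * (f (Suc t) - f t) \<le> real m * (f (Suc t) - f t)"
        using mN mo by (intro mult_right_mono_neg) auto
      also have "\<dots> \<le> C (t div K) - f t" using B by (simp add: algebra_simps)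
      finally show ?thesis .
    qed
    have Np: "real N > 0" using Npos by simp
    have "f (Suc t) \<le> ((real N - 1) * f t + C (t div K)) / real N"
      using D Np by (simp add: pos_le_divide_eq algebra_simps)
    also have "\<dots> = (1 - 1/real N) * f t + C (t div K) / real N"
      using Np by (simp add: field_simps)
    finally show "f (Suc t) \<le> (1 - 1/real (L*K)) * f t + C (t div K) / real (L*K)"
      by (simp add: N_def)
  qed
  define r where "r = exp (- 1 / real L)"
  define E where "E = (\<Sum>i\<in>{1..n}. eps i)"
  have f0: "f 0 = E" by (simp add: f_def bvec_def E_def)
  have fL: "f (L*K) \<le> r ^ L * E + (\<Sum>u<L. (1 - r) * r ^ (L - 1 - u) * C u)"
    using seq_bound[OF L_pos K_pos mono step] by (simp add: r_def f0)
  have rL: "r ^ L = 1 / exp 1"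
  proof -
    have "r ^ L = exp (real L * (- 1 / real L))" unfolding r_def by (rule exp_of_nat_mult[symmetric])
    also have "real L * (- 1 / real L) = -1" using L_pos by simp
    finally show ?thesis by (simp add: exp_minus field_simps)
  qed
  have Opos: "Opt > 0" using OPT_pos Opt_def by simp
  have E0: "E \<ge> 0" unfolding E_def using eps_range by (intro sum_nonneg) auto
  have r0: "0 \<le> r" and r1: "r \<le> 1" using L_pos by (auto simp: r_def)
  have SR0: "(\<Sum>v\<in>{1..u}. R v) \<ge> 0" if "u < L" for u
    using R_nonneg that by (intro sum_nonneg) auto
  have "f (L*K) / Opt \<le> (r ^ L * E + (\<Sum>u<L. (1 - r) * r ^ (L - 1 - u) * C u)) / Opt"
    using fL Opos by (simp add: divide_right_mono)
  also have "\<dots> = E / Opt * (1 / exp 1) + (\<Sum>u<L. (1 - r) * r ^ (L - 1 - u) * (1 + (\<Sum>v\<in>{1..u}. R v) / Opt))"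
  proof -
    have e1: "(r ^ L * E + (\<Sum>u<L. (1 - r) * r ^ (L - 1 - u) * C u)) / Opt
       = r ^ L * E / Opt + (\<Sum>u<L. (1 - r) * r ^ (L - 1 - u) * C u / Opt)"
      by (simp only: add_divide_distrib sum_divide_distrib)
    have e2: "(1 - r) * r ^ (L - 1 - u) * C u / Opt = (1 - r) * r ^ (L - 1 - u) * (1 + (\<Sum>v\<in>{1..u}. R v) / Opt)" for u
      using Opos unfolding C_def by (simp add: field_simps del: sum_divide_distrib)
    show ?thesis by (subst e1, subst e2, simp add: rL)
  qed
  also have "\<dots> \<le> E / LB * (1 / exp 1) + (\<Sum>u<L. (1 - r) * r ^ (L - 1 - u) * (1 + (\<Sum>v\<in>{1..u}. R v) / LB))"
  proof -
    have a1: "E / Opt \<le> E / LB" using E0 LB_pos LB_le Opt_def by (intro divide_left_mono) auto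
    have a2: "(1 - r) * r ^ (L - 1 - u) * (1 + (\<Sum>v\<in>{1..u}. R v) / Opt)
        \<le> (1 - r) * r ^ (L - 1 - u) * (1 + (\<Sum>v\<in>{1..u}. R v) / LB)" if u: "u \<in> {..<L}" for u
    proof -
      have "(\<Sum>v\<in>{1..u}. R v) / Opt \<le> (\<Sum>v\<in>{1..u}. R v) / LB"
        using SR0[of u] u LB_pos LB_le Opt_def by (intro divide_left_mono) auto
      moreover have "0 \<le> (1 - r) * r ^ (L - 1 - u)" using r0 r1 by simp
      ultimately show ?thesis by (intro mult_left_mono) auto
    qed
    show ?thesis
      by (intro add_mono mult_right_mono a1 sum_mono a2) auto
  qed
  finally show ?thesis
    using L_pos by (simp add: f_def E_def Opt_def r_def atLeast0AtMost lessThan_Suc_atMost[symmetric] N_def)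
qed

end
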